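(* For all $0\le t<1$, $$\lim_{x\uparrow B^*\sqrt{1-t}}\frac{\partial}{\partial x}J^*(t,x)=\lim_{x\downarrow B^*\sqrt{1-t}}\frac{\partial}{\partial x}g(t,x),$$ $$\lim_{x\downarrow -B^*\sqrt{1-t}}\frac{\partial}{\partial x}J^*(t,x)=\lim_{x\uparrow -B^*\sqrt{1-t}}\frac{\partial}{\partial x}g(t,x),$$ where $$J^*(t,x)=\begin{cases}(1-t)^{n+1/2}(F_{2n+1}+G_{2n+1})(x/\sqrt{1-t})\,j(B^* ), & |x|<B^*\sqrt{1-t},\\ g(t,x), & |x|\ge B^*\sqrt{1-t}.\end{cases}$$
   Context: $n\ge0$ is an integer. $F_q(y):=\int_0^\infty u^{q-1}e^{yu-u^2/2}\,\mathrm{d}u$ and $G_q(y):=F_q(-y)$. $B^*>0$ is the unique zero of $B\mapsto(2n+1)-BF'_{2n+1}(B)/F_{2n+1}(B)$. $U(t,x)=(1-t)^{n+1/2}(B^* )^{2n+1}F_{2n+1}(x/\sqrt{1-t})/F_{2n+1}(B^* )$ if $x<B^*\sqrt{1-t}$, and $U(t,x)=x^{2n+1}$ otherwise. $g(t,x):=(U(t,x)-x^{2n+1})1_{\{x\le0\}}+(U(t,-x)+x^{2n+1})1_{\{x>0\}}$. $j(D):=\frac{1}{(F_{2n+1}+G_{2n+1})(D)}[D^{2n+1}+(B^* )^{2n+1}G_{2n+1}(D)/F_{2n+1}(B^* )]$. *)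

theory Defs
  imports "HOL-Analysis.Analysis"
begin

definition Fq :: "nat \<Rightarrow> real \<Rightarrow> real" where
  "Fq q y = integral {0..} (\<lambda>u. u ^ (q - 1) * exp (y * u - u\<^sup>2 / 2))"

definition Gq :: "nat \<Rightarrow> real \<Rightarrow> real" where
  "Gq q y = Fq q (- y)"

definition Bstar :: "nat \<Rightarrow> real" where
  "Bstar n = (THE B. B > 0 \<and>
      real (2*n+1) - B * deriv (Fq (2*n+1)) B / Fq (2*n+1) B = 0)"

definition Ufun :: "nat \<Rightarrow> real \<Rightarrow> real \<Rightarrow> real" where
  "Ufun n t x = (if x < Bstar n * sqrt (1 - t)
     then (1 - t) powr (real n + 1/2) * (Bstar n) ^ (2*n+1)
          * Fq (2*n+1) (x / sqrt (1 - t)) / Fq (2*n+1) (Bstar n)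
     else x ^ (2*n+1))"

definition gfun :: "nat \<Rightarrow> real \<Rightarrow> real \<Rightarrow> real" where
  "gfun n t x = (if x \<le> 0 then Ufun n t x - x ^ (2*n+1)
                 else Ufun n t (- x) + x ^ (2*n+1))"

definition jfun :: "nat \<Rightarrow> real \<Rightarrow> real" where
  "jfun n D = (D ^ (2*n+1) + (Bstar n) ^ (2*n+1) * Gq (2*n+1) D / Fq (2*n+1) (Bstar n))
              / (Fq (2*n+1) D + Gq (2*n+1) D)"

definition Jstar :: "nat \<Rightarrow> real \<Rightarrow> real \<Rightarrow> real" where
  "Jstar n t x = (if \<bar>x\<bar> < Bstar n * sqrt (1 - t)
     then (1 - t) powr (real n + 1/2)
          * (Fq (2*n+1) (x / sqrt (1 - t)) + Gq (2*n+1) (x / sqrt (1 - t)))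
          * jfun n (Bstar n)
     else gfun n t x)"

end

theory Submission
  imports Defs
begin


lemma pow_le_fact_exp:
  fixes u :: real assumes "0 \<le> u"
  shows "u ^ k \<le> fact k * exp u"
proof -
  obtain t where t: "exp u = (\<Sum>m<Suc k. (u ^ m) / fact m) + (exp t / fact (Suc k)) * u ^ (Suc k)"
    using Maclaurin_exp_le[of u "Suc k"] by blast
  have "u ^ k / fact k \<le> (\<Sum>m<Suc k. (u ^ m) / fact m)"
    by (rule member_le_sum[where f="\<lambda>m. u ^ m / fact m"]) (use assms in auto)
  also have "\<dots> \<le> exp u" unfolding t using assms by (intro add_increasing2) auto
  finally show ?thesis by (simp add: field_simps)
qed

lemma w_bound:
  fixes u c :: real assumes "0 \<le> u"
  shows "u ^ k * exp (c * u - u\<^sup>2 / 2) \<le> fact k * exp ((c+2)\<^sup>2/2) * exp (-1 * u)"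
proof -
  have "u ^ k * exp (c * u - u\<^sup>2 / 2) \<le> fact k * exp u * exp (c * u - u\<^sup>2 / 2)"
    using pow_le_fact_exp[OF assms, of k] by (intro mult_right_mono) auto
  also have "\<dots> = fact k * exp (u + c*u - u\<^sup>2/2)" by (simp add: exp_add[symmetric])
  also have "\<dots> \<le> fact k * exp ((c+2)\<^sup>2/2 + (-1 * u))"
  proof -
    have "0 \<le> (u - (c+2))\<^sup>2" by simp
    then have "u + c*u - u\<^sup>2/2 \<le> (c+2)\<^sup>2/2 + (-1 * u)" by (simp add: power2_eq_square algebra_simps)
    then show ?thesis by simp
  qed
  also have "\<dots> = fact k * exp ((c+2)\<^sup>2/2) * exp (-1 * u)" by (simp only: exp_add)
  finally show ?thesis .
qed

lemma w_integrable: "(\<lambda>u::real. u ^ k * exp (c * u - u\<^sup>2 / 2)) integrable_on {0..}"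
proof (rule integrable_on_all_intervals_integrable_bound)
  fix a b :: real
  have h: "(\<lambda>u::real. u ^ k * exp (c * u - u\<^sup>2 / 2)) integrable_on ({0..} \<inter> cbox a b)"
  proof -
    have "{0..} \<inter> cbox a b = {max 0 a..b}" by auto
    moreover have "(\<lambda>u::real. u ^ k * exp (c * u - u\<^sup>2 / 2)) integrable_on {max 0 a..b}"
      by (intro integrable_continuous_interval continuous_intros) auto
    ultimately show ?thesis by simp
  qed
  show "(\<lambda>x. if x \<in> {0..} then x ^ k * exp (c * x - x\<^sup>2 / 2) else 0) integrable_on cbox a b"
    unfolding integrable_restrict_Int by (rule h)
next
  fix x :: real assume "x \<in> {0..}"
  then show "norm (x ^ k * exp (c * x - x\<^sup>2 / 2)) \<le> fact k * exp ((c+2)\<^sup>2/2) * exp (-1 * x)"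
    using w_bound[of x k c] by simp
next
  show "(\<lambda>x. fact k * exp ((c+2)\<^sup>2/2) * exp (-1 * x)) integrable_on {0..}"
    using integrable_on_exp_minus_to_infinity[of 1 0] by (intro integrable_on_mult_right) simp
qed

definition I :: "nat \<Rightarrow> real \<Rightarrow> real" where
  "I k c = integral {0..} (\<lambda>u. u ^ k * exp (c * u - u\<^sup>2 / 2))"

lemma Fq_Suc: "Fq (Suc k) y = I k y"
  by (simp add: Fq_def I_def)

lemma I_ge_const:
  assumes "\<And>u. u \<in> {1..2} \<Longrightarrow> m \<le> u ^ k * exp (c * u - u\<^sup>2 / 2)"
  shows "m \<le> I k c"
proof -
  have "m = integral {1..2::real} (\<lambda>_. m)" by simp
  also have "\<dots> \<le> integral {1..2} (\<lambda>u. u ^ k * exp (c * u - u\<^sup>2 / 2))"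
    by (intro integral_le integrable_continuous_interval continuous_intros assms) auto
  also have "\<dots> \<le> I k c" unfolding I_def
    by (intro integral_subset_le w_integrable integrable_continuous_interval continuous_intros) auto
  finally show ?thesis .
qed

lemma I_lower: assumes "0 \<le> c" shows "exp (c - 2) \<le> I k c"
proof (rule I_ge_const)
  fix u :: real assume u: "u \<in> {1..2}"
  have "1 \<le> u ^ k" using u by (intro one_le_power) auto
  moreover have "c - 2 \<le> c * u - u\<^sup>2 / 2"
  proof -
    have "c * 1 \<le> c * u" using u assms by (intro mult_left_mono) auto
    moreover have "u\<^sup>2 \<le> 2\<^sup>2" using u by (intro power_mono) auto
    ultimately show ?thesis by simp
  qed
  ultimately show "exp (c - 2) \<le> u ^ k * exp (c * u - u\<^sup>2 / 2)"
    using mult_mono[of 1 "u ^ k" "exp (c - 2)" "exp (c * u - u\<^sup>2 / 2)"] by simp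
qed

lemma I_pos: "0 < I k c"
proof -
  have "exp (- 2 * \<bar>c\<bar> - 2) \<le> I k c"
  proof (rule I_ge_const)
    fix u :: real assume u: "u \<in> {1..2}"
    have "1 \<le> u ^ k" using u by (intro one_le_power) auto
    moreover have "- 2 * \<bar>c\<bar> - 2 \<le> c * u - u\<^sup>2 / 2"
    proof -
      have "\<bar>c * u\<bar> \<le> \<bar>c\<bar> * 2" using u by (auto simp: abs_mult intro!: mult_left_mono)
      moreover have "u\<^sup>2 \<le> 2\<^sup>2" using u by (intro power_mono) auto
      ultimately show ?thesis unfolding abs_le_iff by simp
    qed
    ultimately show "exp (- 2 * \<bar>c\<bar> - 2) \<le> u ^ k * exp (c * u - u\<^sup>2 / 2)"
      using mult_mono[of 1 "u ^ k" "exp (- 2 * \<bar>c\<bar> - 2)" "exp (c * u - u\<^sup>2 / 2)"] by simp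
  qed
  then show ?thesis by (smt (verit) exp_gt_zero)
qed

lemma exp_rem_bound: "\<bar>exp z - 1 - (z::real)\<bar> \<le> z\<^sup>2 * exp \<bar>z\<bar>"
proof -
  obtain t where t: "\<bar>t\<bar> \<le> \<bar>z\<bar>" "exp z = (\<Sum>m<2. (z ^ m) / fact m) + (exp t / fact 2) * z ^ 2"
    using Maclaurin_exp_le[of z 2] by blast
  have e1: "exp z - 1 - z = exp t / 2 * z\<^sup>2" using t(2) by (simp add: numeral_2_eq_2)
  have "exp t \<le> exp \<bar>z\<bar>" using t(1) by simp
  then have e2: "exp t / 2 \<le> exp \<bar>z\<bar>" using exp_gt_zero[of t] by linarith
  have "\<bar>exp z - 1 - z\<bar> = exp t / 2 * z\<^sup>2" unfolding e1 by (simp add: abs_mult)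
  with e2 show ?thesis using mult_right_mono[of "exp t / 2" "exp \<bar>z\<bar>" "z\<^sup>2"]
    by (simp add: mult.commute)
qed

lemma rem_bound:
  fixes u h y :: real assumes u: "0 \<le> u" and h: "\<bar>h\<bar> \<le> 1"
  shows "\<bar>u ^ k * exp ((y + h) * u - u\<^sup>2 / 2) - u ^ k * exp (y * u - u\<^sup>2 / 2)
           - h * (u ^ Suc k * exp (y * u - u\<^sup>2 / 2))\<bar>
         \<le> h\<^sup>2 * (u ^ Suc (Suc k) * exp ((y + 1) * u - u\<^sup>2 / 2))"
proof -
  have eq: "u ^ k * exp ((y + h) * u - u\<^sup>2 / 2) - u ^ k * exp (y * u - u\<^sup>2 / 2)
           - h * (u ^ Suc k * exp (y * u - u\<^sup>2 / 2))
       = u ^ k * exp (y * u - u\<^sup>2 / 2) * (exp (h * u) - 1 - h * u)"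
    by (simp add: algebra_simps exp_add[symmetric])
  have hu: "\<bar>h * u\<bar> \<le> u" using u h by (simp add: abs_mult mult_left_le_one_le)
  have "\<bar>exp (h * u) - 1 - h * u\<bar> \<le> (h*u)\<^sup>2 * exp \<bar>h*u\<bar>" by (rule exp_rem_bound)
  also have "\<dots> \<le> (h*u)\<^sup>2 * exp u" using hu by (intro mult_left_mono) auto
  finally have b: "\<bar>exp (h * u) - 1 - h * u\<bar> \<le> (h*u)\<^sup>2 * exp u" .
  have "\<bar>u ^ k * exp (y * u - u\<^sup>2 / 2) * (exp (h * u) - 1 - h * u)\<bar>
        = u ^ k * exp (y * u - u\<^sup>2 / 2) * \<bar>exp (h * u) - 1 - h * u\<bar>"
    using u by (simp add: abs_mult)
  also have "\<dots> \<le> u ^ k * exp (y * u - u\<^sup>2 / 2) * ((h*u)\<^sup>2 * exp u)"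
    using u b by (intro mult_left_mono) auto
  also have "\<dots> = h\<^sup>2 * (u ^ Suc (Suc k) * exp ((y + 1) * u - u\<^sup>2 / 2))"
    by (simp add: algebra_simps power2_eq_square exp_add[symmetric])
  finally show ?thesis using eq by simp
qed

lemma I_deriv: "(I k has_real_derivative I (Suc k) y) (at y)"
proof -
  define C where "C = I (Suc (Suc k)) (y + 1)"
  define w where "w = (\<lambda>k c u. u ^ k * exp (c * u - (u::real)\<^sup>2 / 2))"
  have wi: "\<And>k c. w k c integrable_on {0..}" unfolding w_def by (rule w_integrable)
  have Iw: "\<And>k c. I k c = integral {0..} (w k c)" unfolding w_def I_def by simp
  have key: "\<bar>I k (y + h) - I k y - h * I (Suc k) y\<bar> \<le> h\<^sup>2 * C" if h: "\<bar>h\<bar> \<le> 1" for h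
  proof -
    have "I k (y + h) - I k y - h * I (Suc k) y
        = integral {0..} (\<lambda>u. w k (y+h) u - w k y u - h * w (Suc k) y u)"
      unfolding Iw using wi
      by (simp add: integral_diff integral_mult_right integrable_diff integrable_on_mult_right)
    also have "\<bar>\<dots>\<bar> \<le> integral {0..} (\<lambda>u. h\<^sup>2 * w (Suc (Suc k)) (y + 1) u)"
    proof -
      have i1: "(\<lambda>u. w k (y+h) u - w k y u - h * w (Suc k) y u) integrable_on {0..}"
        using wi by (intro integrable_diff integrable_on_mult_right) auto
      have i2: "(\<lambda>u. h\<^sup>2 * w (Suc (Suc k)) (y + 1) u) integrable_on {0..}"
        using wi by (intro integrable_on_mult_right) auto
      show ?thesis unfolding real_norm_def[symmetric]
        by (rule integral_norm_bound_integral[OF i1 i2])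
           (use rem_bound[OF _ h] in \<open>simp add: w_def del: power_Suc\<close>)
    qed
    also have "\<dots> = h\<^sup>2 * C" unfolding C_def Iw by simp
    finally show ?thesis .
  qed
  have "((\<lambda>h. (I k (y + h) - I k y) / h - I (Suc k) y) \<longlongrightarrow> 0) (at 0)"
  proof (rule Lim_null_comparison)
    have "eventually (\<lambda>h::real. h \<noteq> 0 \<and> \<bar>h\<bar> < 1) (at 0)"
      unfolding eventually_at
      by (rule exI[of _ 1], rule conjI, simp, simp add: dist_real_def)
    then show "eventually (\<lambda>h. norm ((I k (y + h) - I k y) / h - I (Suc k) y) \<le> \<bar>h\<bar> * C) (at 0)"
    proof (rule eventually_mono)
      fix h :: real assume h: "h \<noteq> 0 \<and> \<bar>h\<bar> < 1"
      have "(I k (y + h) - I k y) / h - I (Suc k) y = (I k (y + h) - I k y - h * I (Suc k) y) / h"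
        using h by (simp add: field_simps)
      also have "norm \<dots> = \<bar>I k (y + h) - I k y - h * I (Suc k) y\<bar> / \<bar>h\<bar>" by simp
      also have "\<dots> \<le> h\<^sup>2 * C / \<bar>h\<bar>" using key[of h] h by (intro divide_right_mono) auto
      also have "\<dots> = \<bar>h\<bar> * C" using h by (simp add: field_simps power2_eq_square)
      finally show "norm ((I k (y + h) - I k y) / h - I (Suc k) y) \<le> \<bar>h\<bar> * C" .
    qed
    have "((\<lambda>h::real. \<bar>h\<bar> * C) \<longlongrightarrow> \<bar>0\<bar> * C) (at 0)"
      by (intro tendsto_mult tendsto_rabs tendsto_ident_at tendsto_const)
    then show "((\<lambda>h. \<bar>h\<bar> * C) \<longlongrightarrow> 0) (at 0)" by simp
  qed
  then have "((\<lambda>h. (I k (y + h) - I k y) / h) \<longlongrightarrow> I (Suc k) y) (at 0)"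
    by (rule LIM_zero_cancel)
  then show ?thesis by (simp add: DERIV_def)
qed



lemma I_deriv_chain [derivative_intros]:
  "(f has_real_derivative f') (at x within S) \<Longrightarrow>
   ((\<lambda>x. I k (f x)) has_real_derivative I (Suc k) (f x) * f') (at x within S)"
  by (rule DERIV_chain2[OF I_deriv])

lemma I_isCont: "isCont (I k) y"
  by (rule DERIV_isCont[OF I_deriv])

lemma I_isCont_comp [continuous_intros]: "isCont f x \<Longrightarrow> isCont (\<lambda>x. I k (f x)) x"
  by (rule isCont_o2[OF _ I_isCont])

lemma I_CS: "(I (Suc k) y)\<^sup>2 \<le> I (Suc (Suc k)) y * I k y"
proof -
  define l where "l = I (Suc k) y / I k y"
  define w where "w = (\<lambda>k c u. u ^ k * exp (c * u - (u::real)\<^sup>2 / 2))"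
  have wi: "\<And>k c. w k c integrable_on {0..}" unfolding w_def by (rule w_integrable)
  have Iw: "\<And>k c. I k c = integral {0..} (w k c)" unfolding w_def I_def by simp
  have pos: "0 < I k y" by (rule I_pos)
  have eq: "\<And>u. (u - l)\<^sup>2 * w k y u = w (Suc (Suc k)) y u - 2 * l * w (Suc k) y u + l\<^sup>2 * w k y u"
    by (simp add: w_def power2_eq_square algebra_simps)
  have i: "(\<lambda>u. w (Suc (Suc k)) y u - 2 * l * w (Suc k) y u + l\<^sup>2 * w k y u) integrable_on {0..}"
    using wi by (intro integrable_add integrable_diff integrable_on_mult_right) auto
  have "0 \<le> integral {0..} (\<lambda>u. w (Suc (Suc k)) y u - 2 * l * w (Suc k) y u + l\<^sup>2 * w k y u)"
    apply (rule integral_nonneg[OF i])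
    apply (subst eq[symmetric])
    apply (simp add: w_def)
    done
  also have "\<dots> = I (Suc (Suc k)) y - 2 * l * I (Suc k) y + l\<^sup>2 * I k y"
    unfolding Iw using wi
    by (simp add: integral_add integral_diff integral_mult_right integrable_diff integrable_on_mult_right)
  also have "\<dots> = I (Suc (Suc k)) y - (I (Suc k) y)\<^sup>2 / I k y"
    using pos by (simp add: l_def power2_eq_square field_simps)
  finally show ?thesis using pos by (simp add: field_simps)
qed

definition m :: "nat \<Rightarrow> real \<Rightarrow> real" where "m k y = I (Suc k) y / I k y"

lemma m_deriv: "(m k has_real_derivative (I (Suc (Suc k)) y * I k y - (I (Suc k) y)\<^sup>2) / (I k y)\<^sup>2) (at y)"
proof -
  have "((\<lambda>y. I (Suc k) y / I k y) has_real_derivative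
          (I (Suc (Suc k)) y * I k y - I (Suc k) y * I (Suc k) y) / (I k y ^ Suc (Suc 0))) (at y)"
    using DERIV_quotient[OF I_deriv I_deriv, of k y "Suc k"] I_pos[of k y] by (simp add: mult.commute)
  then show ?thesis unfolding m_def by (simp add: power2_eq_square)
qed

lemma m_mono: assumes "a \<le> b" shows "m k a \<le> m k b"
  using assms
proof (rule DERIV_nonneg_imp_nondecreasing)
  fix x assume "a \<le> x" "x \<le> b"
  show "\<exists>y. (m k has_real_derivative y) (at x) \<and> 0 \<le> y"
    using m_deriv I_CS by (intro exI conjI) (auto intro!: divide_nonneg_nonneg)
qed

lemma m_pos: "0 < m k y" unfolding m_def using I_pos by simp

lemma m_isCont: "isCont (m k) y" by (rule DERIV_isCont[OF m_deriv])

lemma phi_strict: assumes "0 < a" "a < b" shows "a * m k a < b * m k b"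
proof -
  have "a * m k a \<le> a * m k b" using assms m_mono[of a b k] by (intro mult_left_mono) auto
  also have "\<dots> < b * m k b" using assms m_pos[of k b] by (intro mult_strict_right_mono) auto
  finally show ?thesis .
qed

lemma phi_large: "\<exists>B>0. r \<le> B * m k B"
proof -
  define B where "B = \<bar>r\<bar> + 3 + \<bar>ln (I k 0)\<bar>"
  have B: "0 < B" unfolding B_def by simp
  have "\<And>x. 0 \<le> x \<Longrightarrow> x \<le> B \<Longrightarrow> ((\<lambda>x. ln (I k x)) has_real_derivative m k x) (at x)"
    using DERIV_chain2[OF DERIV_ln_divide[OF I_pos] I_deriv] by (simp add: m_def)
  from MVT2[OF B this] obtain z where z: "0 < z" "z < B" "ln (I k B) - ln (I k 0) = (B - 0) * m k z"
    by blast
  have "B - 2 \<le> ln (I k B)" using I_lower[of B k] B I_pos[of k B] by (simp add: ln_ge_iff)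
  moreover have "B * m k z \<le> B * m k B" using z B m_mono[of z B k] by (intro mult_left_mono) auto
  ultimately have "B - 2 - ln (I k 0) \<le> B * m k B" using z(3) by simp
  then have "r \<le> B * m k B" using B_def abs_ge_self[of r] abs_ge_self[of "ln (I k 0)"] by linarith
  then show ?thesis using B by blast
qed

lemma Bstar_prop: "0 < Bstar n \<and> Bstar n * I (Suc (2*n)) (Bstar n) = real (2*n+1) * I (2*n) (Bstar n)"
proof -
  let ?k = "2*n"
  have F: "Fq (2*n+1) = I ?k" by (rule ext) (simp add: Fq_Suc)
  have D: "deriv (Fq (2*n+1)) B = I (Suc ?k) B" for B unfolding F by (rule DERIV_imp_deriv[OF I_deriv])
  have P_iff: "(B > 0 \<and> real (2*n+1) - B * deriv (Fq (2*n+1)) B / Fq (2*n+1) B = 0)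
        \<longleftrightarrow> (B > 0 \<and> B * m ?k B = real (2*n+1))" for B
  proof -
    have "B * deriv (Fq (2*n+1)) B / Fq (2*n+1) B = B * m ?k B"
      unfolding D unfolding F m_def by simp
    then show ?thesis by linarith
  qed
  obtain B0 where B0: "B0 > 0" "real (2*n+1) \<le> B0 * m ?k B0" using phi_large by blast
  have cont: "\<And>x. isCont (\<lambda>x. x * m ?k x) x" by (intro isCont_mult continuous_ident m_isCont)
  have "\<exists>x. 0 \<le> x \<and> x \<le> B0 \<and> x * m ?k x = real (2*n+1)"
    by (rule IVT[where f="\<lambda>x. x * m ?k x"]) (use B0 cont in simp_all)
  then obtain x where x: "0 \<le> x" "x * m ?k x = real (2*n+1)" by blast
  have x0: "0 < x"
  proof (rule ccontr)
    assume "\<not> 0 < x" then have "x = 0" using x(1) by linarith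
    then show False using x(2) by simp
  qed
  have uniq: "y = x" if "y > 0" "y * m ?k y = real (2*n+1)" for y
  proof (rule ccontr)
    assume "y \<noteq> x"
    then consider "y < x" | "x < y" by linarith
    then show False
    proof cases
      case 1 then show False using phi_strict[of y x ?k] that x by linarith
    next
      case 2 then show False using phi_strict[of x y ?k] that x x0 by linarith
    qed
  qed
  have "Bstar n = x" unfolding Bstar_def P_iff
  proof (rule the_equality)
    show "0 < x \<and> x * m ?k x = real (2*n+1)" using x0 x by simp
    fix y assume "0 < y \<and> y * m ?k y = real (2*n+1)"
    then show "y = x" using uniq by blast
  qed
  moreover have "x * I (Suc ?k) x = (x * m ?k x) * I ?k x"
    using I_pos[of ?k x] by (simp add: m_def)
  ultimately show ?thesis using x0 x(2) by simp
qed



lemma lim_from_cont: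
  assumes "eventually (\<lambda>x. g x = f x) F" "F \<le> at p" "isCont g p"
  shows "(f \<longlongrightarrow> g p) F"
proof -
  have "(g \<longlongrightarrow> g p) F" using assms(3) unfolding isCont_def by (rule tendsto_mono[OF assms(2)])
  then show ?thesis using tendsto_cong[OF assms(1)] by simp
qed

lemma at_left_le: "at_left (p::real) \<le> at p" by (rule at_le) simp
lemma at_right_le: "at_right (p::real) \<le> at p" by (rule at_le) simp

theorem lemma4p5:
  fixes n :: nat and t :: real
  assumes "0 \<le> t" and "t < 1"
  shows "(\<exists>L. ((\<lambda>x. deriv (Jstar n t) x) \<longlongrightarrow> L) (at_left (Bstar n * sqrt (1 - t)))
             \<and> ((\<lambda>x. deriv (gfun n t) x) \<longlongrightarrow> L) (at_right (Bstar n * sqrt (1 - t))))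
       \<and> (\<exists>L. ((\<lambda>x. deriv (Jstar n t) x) \<longlongrightarrow> L) (at_right (- Bstar n * sqrt (1 - t)))
             \<and> ((\<lambda>x. deriv (gfun n t) x) \<longlongrightarrow> L) (at_left (- Bstar n * sqrt (1 - t))))"
proof -
  define b where "b = Bstar n"
  define s where "s = sqrt (1 - t)"
  define a where "a = b * s"
  define k where "k = 2 * n"
  define P where "P = (1 - t) powr (real n + 1/2)"
  have b0: "0 < b" and key: "b * I (Suc k) b = real (2*n+1) * I k b"
    using Bstar_prop[of n] unfolding b_def k_def by auto
  have s0: "0 < s" unfolding s_def using assms by simp
  have a0: "0 < a" unfolding a_def using b0 s0 by simp
  have F: "Fq (2*n+1) = I k" unfolding k_def by (rule ext) (simp add: Fq_Suc)
  have G: "Gq (2*n+1) y = I k (- y)" for y unfolding Gq_def F ..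
  have Ps: "P = s ^ (2*n+1)"
  proof -
    have "P = (1 - t) powr real n * (1 - t) powr (1/2)" unfolding P_def using assms
      by (simp add: powr_add)
    also have "\<dots> = (1 - t) ^ n * s" unfolding s_def using assms
      by (simp add: powr_realpow powr_half_sqrt)
    also have "\<dots> = s ^ (2*n+1)" unfolding s_def using assms
      by (simp add: power_mult real_sqrt_pow2)
    finally show ?thesis .
  qed
  define Z where "Z = I k b"
  have Z0: "0 < Z" unfolding Z_def by (rule I_pos)
  have Zm: "0 < I k (- b)" by (rule I_pos)
  define jb where "jb = jfun n b"
  have jb: "jb = b ^ (2*n+1) / Z"
  proof -
    have e: "b ^ (2*n+1) + b ^ (2*n+1) * I k (- b) / Z = b ^ (2*n+1) / Z * (Z + I k (- b))"
      using Z0 by (simp add: field_simps)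
    show ?thesis
      unfolding jb_def jfun_def b_def[symmetric] F G Z_def[symmetric] e using Z0 Zm by simp
  qed
  define J1' where "J1' = (\<lambda>x. P * (I (Suc k) (x/s) * (1/s) + I (Suc k) (-(x/s)) * (-(1/s))) * jb)"
  define gR' where "gR' = (\<lambda>x. P * b ^ (2*n+1) * (I (Suc k) (-(x/s)) * (-(1/s))) / Z + real (2*n+1) * x ^ (2*n))"
  define gL' where "gL' = (\<lambda>x. P * b ^ (2*n+1) * (I (Suc k) (x/s) * (1/s)) / Z - real (2*n+1) * x ^ (2*n))"
  have dJ: "deriv (Jstar n t) x = J1' x" if x: "\<bar>x\<bar> < a" for x
  proof -
    have d: "((\<lambda>x. P * (I k (x/s) + I k (-(x/s))) * jb) has_real_derivative J1' x) (at x)"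
      unfolding J1'_def using s0 by (auto intro!: derivative_eq_intros)
    have "(Jstar n t has_real_derivative J1' x) (at x)"
    proof (rule has_field_derivative_transform_within_open[OF d, of "{-a<..<a}"])
      show "x \<in> {-a<..<a}" using x by auto
      fix z assume "z \<in> {-a<..<a}"
      then show "P * (I k (z/s) + I k (-(z/s))) * jb = Jstar n t z"
        unfolding Jstar_def P_def jb_def b_def s_def
        using a_def b_def s_def F G by (auto simp: abs_less_iff)
    qed simp
    then show ?thesis by (rule DERIV_imp_deriv)
  qed
  have dgR: "deriv (gfun n t) x = gR' x" if x: "0 < x" for x
  proof -
    have d: "((\<lambda>x. P * b ^ (2*n+1) * I k (-(x/s)) / Z + x ^ (2*n+1)) has_real_derivative gR' x) (at x)"
    proof -
      have p: "((\<lambda>x. x^(2*n+1)) has_real_derivative real(2*n+1) * x^(2*n)) (at x)"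
        using DERIV_pow[of "2*n+1" x] by simp
      have d1: "((\<lambda>x. P * b ^ (2*n+1) * I k (-(x/s)) / Z) has_real_derivative
                 P * b ^ (2*n+1) * (I (Suc k) (-(x/s)) * (-(1/s))) / Z) (at x)"
        using s0 Z0 by (auto intro!: derivative_eq_intros)
      show ?thesis unfolding gR'_def by (rule DERIV_add[OF d1 p])
    qed
    have "(gfun n t has_real_derivative gR' x) (at x)"
    proof (rule has_field_derivative_transform_within_open[OF d, of "{0<..}"])
      show "x \<in> {0<..}" using x by auto
      fix z :: real assume z: "z \<in> {0<..}"
      then have "- z < b * s" using a0 a_def by simp
      then show "P * b ^ (2*n+1) * I k (-(z/s)) / Z + z ^ (2*n+1) = gfun n t z"
        unfolding gfun_def Ufun_def P_def b_def s_def Z_def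
        using z F b_def s_def by auto
    qed simp
    then show ?thesis by (rule DERIV_imp_deriv)
  qed
  have dgL: "deriv (gfun n t) x = gL' x" if x: "x < - a" for x
  proof -
    have d: "((\<lambda>x. P * b ^ (2*n+1) * I k (x/s) / Z - x ^ (2*n+1)) has_real_derivative gL' x) (at x)"
    proof -
      have p: "((\<lambda>x. x^(2*n+1)) has_real_derivative real(2*n+1) * x^(2*n)) (at x)"
        using DERIV_pow[of "2*n+1" x] by simp
      have d1: "((\<lambda>x. P * b ^ (2*n+1) * I k (x/s) / Z) has_real_derivative
                 P * b ^ (2*n+1) * (I (Suc k) (x/s) * (1/s)) / Z) (at x)"
        using s0 Z0 by (auto intro!: derivative_eq_intros)
      show ?thesis unfolding gL'_def by (rule DERIV_diff[OF d1 p])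
    qed
    have "(gfun n t has_real_derivative gL' x) (at x)"
    proof (rule has_field_derivative_transform_within_open[OF d, of "{..<-a}"])
      show "x \<in> {..<-a}" using x by auto
      fix z :: real assume z: "z \<in> {..<-a}"
      then have "z < b * s" "z \<le> 0" using a0 a_def by auto
      then show "P * b ^ (2*n+1) * I k (z/s) / Z - z ^ (2*n+1) = gfun n t z"
        unfolding gfun_def Ufun_def P_def b_def s_def Z_def
        using z F b_def s_def by auto
    qed simp
    then show ?thesis by (rule DERIV_imp_deriv)
  qed
  have cJ: "isCont J1' x" for x unfolding J1'_def using s0 by (intro continuous_intros) auto
  have cR: "isCont gR' x" for x unfolding gR'_def using s0 Z0 by (intro continuous_intros) auto
  have cL: "isCont gL' x" for x unfolding gL'_def using s0 Z0 by (intro continuous_intros) auto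
  have as: "a / s = b" unfolding a_def using s0 by simp
  have X: "I (Suc k) b = real (2*n+1) * Z / b" using key b0 unfolding Z_def by (simp add: field_simps)
  have pa: "a ^ (2*n) = b ^ (2*n) * s ^ (2*n)" unfolding a_def by (simp add: power_mult_distrib)
  have eq1: "J1' a = gR' a"
    unfolding J1'_def gR'_def as X Ps jb pa using s0 b0 Z0 by (simp add: field_simps)
  have pa2: "(-a) ^ (2*n) = a ^ (2*n)" by (simp add: power_mult)
  have eq2: "J1' (-a) = gL' (-a)"
  proof -
    have as2: "(-a)/s = -b" "-((-a)/s) = b" using as by auto
    show ?thesis unfolding J1'_def gL'_def as2 X Ps jb pa2 pa using s0 b0 Z0 by (simp add: X field_simps)
  qed
  have L1: "(deriv (Jstar n t) \<longlongrightarrow> J1' a) (at_left a)"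
    by (rule lim_from_cont[OF _ at_left_le cJ], rule eventually_at_leftI[of "-a"])
       (use a0 dJ in \<open>auto simp: abs_less_iff\<close>)
  have R1: "(deriv (gfun n t) \<longlongrightarrow> J1' a) (at_right a)"
    unfolding eq1
    by (rule lim_from_cont[OF _ at_right_le cR], rule eventually_at_rightI[of _ "a+1"])
       (use a0 dgR in auto)
  have L2: "(deriv (Jstar n t) \<longlongrightarrow> J1' (-a)) (at_right (-a))"
    by (rule lim_from_cont[OF _ at_right_le cJ], rule eventually_at_rightI[of _ "a"])
       (use a0 dJ in \<open>auto simp: abs_less_iff\<close>)
  have R2: "(deriv (gfun n t) \<longlongrightarrow> J1' (-a)) (at_left (-a))"
    unfolding eq2
    by (rule lim_from_cont[OF _ at_left_le cL], rule eventually_at_leftI[of "-a-1"])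
       (use a0 dgL in auto)
  have "Bstar n * sqrt (1 - t) = a" "- Bstar n * sqrt (1 - t) = -a" unfolding a_def b_def s_def by auto
  then show ?thesis using L1 R1 L2 R2 by auto
qed

end
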